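(* Let $g$ and $\hat g$ be metrics on an $(n+1)$-manifold with $g=\hat g+\mathcal H\,k\otimes k$, where $k$ is a one-form that is null and affinely geodesic for $g$ ($g^{\alpha\beta}k_\alpha k_\beta=0$, $k^\alpha\nabla_\alpha k_\beta=0$, indices raised with $g$, $\nabla$ the Levi-Civita connection of $g$) and $\mathcal H$ is a function. Let $h^\alpha{}_\beta$ be a projector field with $h_{\alpha\beta}$ symmetric and $h^\alpha{}_\beta k_\alpha=0$. Then the Riemann tensors $R$ of $g$ and $\hat R$ of $\hat g$ satisfy $\hat R^\mu{}_{\alpha\nu\beta}h^\delta{}_\mu h^\nu{}_\gamma h^\alpha{}_\lambda h^\beta{}_\sigma=R^\mu{}_{\alpha\nu\beta}h^\delta{}_\mu h^\nu{}_\gamma h^\alpha{}_\lambda h^\beta{}_\sigma-2\mathcal H\,h^{\delta\tau}h^\nu{}_\gamma h^\alpha{}_\lambda h^\beta{}_\sigma\big(\nabla_{[\nu|}k_{[\tau}\nabla_{\alpha]}k_{|\beta]}+\nabla_{[\nu}k_{\beta]}\nabla_{[\alpha}k_{\tau]}\big)$.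
   Context: Square brackets denote antisymmetrization; vertical bars exclude indices from it, so the first term is antisymmetrized in the pair $(\nu,\beta)$ and in the pair $(\tau,\alpha)$. *)

theory Defs
  imports "HOL-Analysis.Analysis"
begin

text \<open>Local coordinate rendering: a chart domain U (open) in real^'n, where
  CARD('n) = n+1 is the manifold dimension.
  Lower-index objects carry lower indices, h x $ a $ b stands for h^a_b.\<close>

definition pd :: "(real^'n \<Rightarrow> real) \<Rightarrow> 'n \<Rightarrow> real^'n \<Rightarrow> real" where
  "pd f i x = frechet_derivative f (at x) (axis i 1)"

fun Ck :: "nat \<Rightarrow> (real^'n) set \<Rightarrow> (real^'n \<Rightarrow> real) \<Rightarrow> bool" where
  "Ck 0 U f = continuous_on U f"
| "Ck (Suc m) U f = ((\<forall>x\<in>U. f differentiable (at x)) \<and> (\<forall>i. Ck m U (pd f i)))"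

definition smooth_on :: "(real^'n) set \<Rightarrow> (real^'n \<Rightarrow> real) \<Rightarrow> bool" where
  "smooth_on U f = (\<forall>m. Ck m U f)"

definition metric_on :: "(real^'n) set \<Rightarrow> (real^'n \<Rightarrow> real^'n^'n) \<Rightarrow> bool" where
  "metric_on U g = ((\<forall>a b. smooth_on U (\<lambda>y. g y $ a $ b)) \<and>
     (\<forall>x\<in>U. \<forall>a b. g x $ a $ b = g x $ b $ a) \<and> (\<forall>x\<in>U. det (g x) \<noteq> 0))"

definition ginv :: "(real^'n \<Rightarrow> real^'n^'n) \<Rightarrow> real^'n \<Rightarrow> 'n \<Rightarrow> 'n \<Rightarrow> real" where
  "ginv g x a b = matrix_inv (g x) $ a $ b"

definition chr :: "(real^'n \<Rightarrow> real^'n^'n) \<Rightarrow> real^'n \<Rightarrow> 'n \<Rightarrow> 'n \<Rightarrow> 'n \<Rightarrow> real" where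
  "chr g x a b c = (1/2) * (\<Sum>d\<in>UNIV. ginv g x a d *
     (pd (\<lambda>y. g y $ d $ c) b x + pd (\<lambda>y. g y $ d $ b) c x - pd (\<lambda>y. g y $ b $ c) d x))"

text \<open>Riemann tensor R^m_{a n b} = d_n Gamma^m_ab - d_b Gamma^m_an
  + Gamma^m_nl Gamma^l_ab - Gamma^m_bl Gamma^l_an, i.e. R^m_{anb} V^a = [nabla_n, nabla_b] V^m.\<close>
definition riem :: "(real^'n \<Rightarrow> real^'n^'n) \<Rightarrow> real^'n \<Rightarrow> 'n \<Rightarrow> 'n \<Rightarrow> 'n \<Rightarrow> 'n \<Rightarrow> real" where
  "riem g x m a n b =
     pd (\<lambda>y. chr g y m a b) n x - pd (\<lambda>y. chr g y m a n) b x
     + (\<Sum>l\<in>UNIV. chr g x m n l * chr g x l a b - chr g x m b l * chr g x l a n)"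

definition covd1 :: "(real^'n \<Rightarrow> real^'n^'n) \<Rightarrow> (real^'n \<Rightarrow> real^'n) \<Rightarrow> real^'n \<Rightarrow> 'n \<Rightarrow> 'n \<Rightarrow> real" where
  "covd1 g k x a b = pd (\<lambda>y. k y $ b) a x - (\<Sum>l\<in>UNIV. chr g x l a b * k x $ l)"

definition raise1 :: "(real^'n \<Rightarrow> real^'n^'n) \<Rightarrow> (real^'n \<Rightarrow> real^'n) \<Rightarrow> real^'n \<Rightarrow> 'n \<Rightarrow> real" where
  "raise1 g k x a = (\<Sum>b\<in>UNIV. ginv g x a b * k x $ b)"

end

theory Submission
  imports Defs
begin


lemma smooth_diff: "smooth_on U f \<Longrightarrow> y \<in> U \<Longrightarrow> f differentiable (at y)"
  unfolding smooth_on_def by (metis Ck.simps(2))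

lemma smooth_pd: "smooth_on U f \<Longrightarrow> smooth_on U (pd f i)"
  unfolding smooth_on_def by (metis Ck.simps(2))

lemma pd_deriv: "f differentiable (at x) \<Longrightarrow> (f has_derivative frechet_derivative f (at x)) (at x)"
  using frechet_derivative_works by blast

lemma pd_of_has: "(f has_derivative f') (at x) \<Longrightarrow> pd f i x = f' (axis i 1)"
  unfolding pd_def using frechet_derivative_at by metis

lemma pd_add: "f differentiable (at x) \<Longrightarrow> g differentiable (at x) \<Longrightarrow>
   pd (\<lambda>y. f y + g y) i x = pd f i x + pd g i x"
proof -
  assume f: "f differentiable (at x)" and g: "g differentiable (at x)"
  have "((\<lambda>y. f y + g y) has_derivative (\<lambda>h. frechet_derivative f (at x) h + frechet_derivative g (at x) h)) (at x)"
    by (intro has_derivative_add pd_deriv f g)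
  from pd_of_has[OF this] show ?thesis by (simp add: pd_def)
qed

lemma pd_diff: "f differentiable (at x) \<Longrightarrow> g differentiable (at x) \<Longrightarrow>
   pd (\<lambda>y. f y - g y) i x = pd f i x - pd g i x"
proof -
  assume f: "f differentiable (at x)" and g: "g differentiable (at x)"
  have "((\<lambda>y. f y - g y) has_derivative (\<lambda>h. frechet_derivative f (at x) h - frechet_derivative g (at x) h)) (at x)"
    by (intro has_derivative_diff pd_deriv f g)
  from pd_of_has[OF this] show ?thesis by (simp add: pd_def)
qed

lemma pd_mult: "f differentiable (at x) \<Longrightarrow> g differentiable (at x) \<Longrightarrow>
   pd (\<lambda>y. f y * g y) i x = pd f i x * g x + f x * pd g i x"
proof -
  assume f: "f differentiable (at x)" and g: "g differentiable (at x)"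
  have "((\<lambda>y. f y * g y) has_derivative (\<lambda>h. f x * frechet_derivative g (at x) h + frechet_derivative f (at x) h * g x)) (at x)"
    by (intro has_derivative_mult pd_deriv f g)
  from pd_of_has[OF this] show ?thesis by (simp add: pd_def algebra_simps)
qed

lemma pd_mult3: "f differentiable (at x) \<Longrightarrow> g differentiable (at x) \<Longrightarrow> h differentiable (at x) \<Longrightarrow>
   pd (\<lambda>y. f y * g y * h y) i x = pd f i x * g x * h x + f x * pd g i x * h x + f x * g x * pd h i x"
  by (simp add: pd_mult differentiable_mult algebra_simps)

lemma pd_const: "pd (\<lambda>y. c) i x = 0"
  by (rule pd_of_has[of _ "\<lambda>_. 0", simplified]) (rule has_derivative_const)

lemma pd_cmult: "f differentiable (at x) \<Longrightarrow> pd (\<lambda>y. c * f y) i x = c * pd f i x"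
  using pd_mult[of "\<lambda>y. c" x f i] by (simp add: pd_const)

lemma pd_sum: "finite S \<Longrightarrow> (\<And>j. j \<in> S \<Longrightarrow> f j differentiable (at x)) \<Longrightarrow>
   pd (\<lambda>y. \<Sum>j\<in>S. f j y) i x = (\<Sum>j\<in>S. pd (f j) i x)"
proof -
  assume S: "finite S" and d: "\<And>j. j \<in> S \<Longrightarrow> f j differentiable (at x)"
  have "((\<lambda>y. \<Sum>j\<in>S. f j y) has_derivative (\<lambda>h. \<Sum>j\<in>S. frechet_derivative (f j) (at x) h)) (at x)"
    by (intro has_derivative_sum pd_deriv d)
  from pd_of_has[OF this] show ?thesis by (simp add: pd_def)
qed

lemma pd_cong:
  assumes "open U" "x \<in> U" "\<And>y. y \<in> U \<Longrightarrow> f y = g y"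
  shows "pd f i x = pd g i x"
proof -
  have "(\<lambda>f'. (f has_derivative f') (at x)) = (\<lambda>f'. (g has_derivative f') (at x))"
  proof (intro ext iffI)
    fix f' assume "(f has_derivative f') (at x)"
    then show "(g has_derivative f') (at x)"
      by (rule has_derivative_transform_within_open[OF _ assms(1,2)]) (simp add: assms(3))
  next
    fix f' assume "(g has_derivative f') (at x)"
    then show "(f has_derivative f') (at x)"
      by (rule has_derivative_transform_within_open[OF _ assms(1,2)]) (simp add: assms(3))
  qed
  then show ?thesis unfolding pd_def frechet_derivative_def by simp
qed

lemma diff_cong:
  assumes "open U" "x \<in> U" "\<And>y. y \<in> U \<Longrightarrow> f y = g y" "f differentiable (at x)"
  shows "g differentiable (at x)"
  using assms unfolding differentiable_def
  by (metis has_derivative_transform_within_open)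

lemma differentiable_prod':
  fixes f :: "'i \<Rightarrow> 'a::real_normed_vector \<Rightarrow> real"
  shows "finite S \<Longrightarrow> (\<And>j. j \<in> S \<Longrightarrow> f j differentiable (at x)) \<Longrightarrow>
   (\<lambda>y. \<Prod>j\<in>S. f j y) differentiable (at x)"
proof (induction S rule: finite_induct)
  case empty then show ?case by simp
next
  case (insert a S)
  then show ?case by (simp add: differentiable_mult)
qed

lemma det_differentiable:
  fixes M :: "real^'m \<Rightarrow> real^'n^'n"
  assumes "\<And>i j. (\<lambda>z. M z $ i $ j) differentiable (at y)"
  shows "(\<lambda>z. det (M z)) differentiable (at y)"
  unfolding det_def
  by (intro differentiable_sum ballI differentiable_mult differentiable_const differentiable_prod' assms finite)


lemma inv_mat:
  fixes A :: "real^'n^'n"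
  assumes "det A \<noteq> 0"
  shows "A ** matrix_inv A = mat 1" "matrix_inv A ** A = mat 1"
proof -
  have "invertible A" using assms invertible_det_nz by blast
  then have "\<exists>A'. A ** A' = mat 1 \<and> A' ** A = mat 1" unfolding invertible_def by blast
  then have "A ** matrix_inv A = mat 1 \<and> matrix_inv A ** A = mat 1"
    unfolding matrix_inv_def by (rule someI_ex)
  then show "A ** matrix_inv A = mat 1" "matrix_inv A ** A = mat 1" by auto
qed

lemma inv_unique:
  fixes A B :: "real^'n^'n"
  assumes "det A \<noteq> 0" "A ** B = mat 1"
  shows "matrix_inv A = B"
proof -
  have "B = (matrix_inv A ** A) ** B" by (simp add: inv_mat(2)[OF assms(1)] matrix_mul_lid)
  also have "\<dots> = matrix_inv A" by (simp add: matrix_mul_assoc[symmetric] assms(2) matrix_mul_rid)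
  finally show ?thesis by simp
qed

lemma inv_sym:
  fixes A :: "real^'n^'n"
  assumes "det A \<noteq> 0" "\<And>a b. A $ a $ b = A $ b $ a"
  shows "matrix_inv A $ a $ b = matrix_inv A $ b $ a"
proof -
  have tA: "transpose A = A" using assms(2) by (simp add: vec_eq_iff transpose_def)
  have "A ** transpose (matrix_inv A) = mat 1"
    by (metis inv_mat(2)[OF assms(1)] matrix_transpose_mul tA transpose_mat)
  then have "matrix_inv A = transpose (matrix_inv A)" by (rule inv_unique[OF assms(1)])
  then show ?thesis by (metis transpose_def vec_lambda_beta)
qed

lemma mmul_nth: "((A::real^'n^'n) ** B) $ i $ j = (\<Sum>k\<in>UNIV. A $ i $ k * B $ k $ j)"
  by (simp add: matrix_matrix_mult_def)

lemma mat1_nth: "(mat 1 :: real^'n^'n) $ i $ j = (if i = j then 1 else 0)"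
  by (simp add: mat_def)

lemma inv_cramer:
  fixes A :: "real^'n^'n"
  assumes "det A \<noteq> 0"
  shows "matrix_inv A $ a $ b = det (\<chi> i j. if j = a then axis b 1 $ i else A $ i $ j) / det A"
proof -
  define x where "x = matrix_inv A *v axis b 1"
  have "A *v x = axis b 1"
    unfolding x_def by (simp add: matrix_vector_mul_assoc inv_mat(1)[OF assms] matrix_vector_mul_lid)
  then have "x = (\<chi> k. det (\<chi> i j. if j = k then axis b 1 $ i else A $ i $ j) / det A)"
    using cramer[OF assms] by blast
  then have "x $ a = det (\<chi> i j. if j = a then axis b 1 $ i else A $ i $ j) / det A" by simp
  moreover have "x $ a = matrix_inv A $ a $ b"
    unfolding x_def by (simp add: matrix_vector_mult_def axis_def if_distrib cong: if_cong)
  ultimately show ?thesis by simp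
qed

lemma metric_det: "metric_on U g \<Longrightarrow> y \<in> U \<Longrightarrow> det (g y) \<noteq> 0"
  unfolding metric_on_def by blast

lemma metric_sym: "metric_on U g \<Longrightarrow> y \<in> U \<Longrightarrow> g y $ a $ b = g y $ b $ a"
  unfolding metric_on_def by blast

lemma metric_smooth: "metric_on U g \<Longrightarrow> smooth_on U (\<lambda>y. g y $ a $ b)"
  unfolding metric_on_def by blast

lemma ginv_diff:
  fixes g :: "real^'n \<Rightarrow> real^'n^'n"
  assumes g: "metric_on U g" and U: "open U" "y \<in> U"
  shows "(\<lambda>z. ginv g z a b) differentiable (at y)"
proof -
  define M where "M = (\<lambda>z. (\<chi> i j. if j = a then axis b 1 $ i else g z $ i $ j) :: real^'n^'n)"
  have d1: "(\<lambda>z. det (M z)) differentiable (at y)"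
  proof (rule det_differentiable)
    fix i j
    show "(\<lambda>z. M z $ i $ j) differentiable (at y)"
      by (cases "j = a") (simp_all add: M_def smooth_diff[OF metric_smooth[OF g] U(2)])
  qed
  have d2: "(\<lambda>z. det (g z)) differentiable (at y)"
    by (rule det_differentiable) (simp add: smooth_diff[OF metric_smooth[OF g] U(2)])
  have "(\<lambda>z. det (M z) / det (g z)) differentiable (at y)"
    by (rule differentiable_divide[OF d1 d2 metric_det[OF g U(2)]])
  then show ?thesis
    by (rule diff_cong[OF U, rotated -1]) (simp add: ginv_def M_def inv_cramer[OF metric_det[OF g]])
qed

lemma ginv_sym: "metric_on U g \<Longrightarrow> y \<in> U \<Longrightarrow> ginv g y a b = ginv g y b a"
  unfolding ginv_def by (rule inv_sym[OF metric_det metric_sym]) auto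

lemma ginv_left: "metric_on U g \<Longrightarrow> y \<in> U \<Longrightarrow> (\<Sum>e\<in>UNIV. ginv g y m e * g y $ e $ f) = (if m = f then 1 else 0)"
  using inv_mat(2)[OF metric_det, of U g y] unfolding ginv_def
  by (metis mat1_nth mmul_nth)

lemma ginv_right: "metric_on U g \<Longrightarrow> y \<in> U \<Longrightarrow> (\<Sum>f\<in>UNIV. g y $ e $ f * ginv g y f d) = (if e = d then 1 else 0)"
  using inv_mat(1)[OF metric_det, of U g y] unfolding ginv_def
  by (metis mat1_nth mmul_nth)

lemma inv_deriv_alg:
  fixes P G :: "'n::finite \<Rightarrow> real" and g G' dg :: "'n \<Rightarrow> 'n \<Rightarrow> real"
  assumes h1: "\<And>f. (\<Sum>e\<in>UNIV. P e * g e f) = - (\<Sum>e\<in>UNIV. G e * dg e f)"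
    and h2: "\<And>e d. (\<Sum>f\<in>UNIV. g e f * G' f d) = (if e = d then 1 else 0)"
  shows "P d = - (\<Sum>e\<in>UNIV. \<Sum>f\<in>UNIV. G e * dg e f * G' f d)"
proof -
  have "P d = (\<Sum>e\<in>UNIV. P e * (\<Sum>f\<in>UNIV. g e f * G' f d))"
    by (simp add: h2 if_distrib cong: if_cong)
  also have "\<dots> = (\<Sum>e\<in>UNIV. \<Sum>f\<in>UNIV. P e * g e f * G' f d)"
    by (simp add: sum_distrib_left mult.assoc)
  also have "\<dots> = (\<Sum>f\<in>UNIV. \<Sum>e\<in>UNIV. P e * g e f * G' f d)"
    by (rule sum.swap)
  also have "\<dots> = (\<Sum>f\<in>UNIV. (\<Sum>e\<in>UNIV. P e * g e f) * G' f d)"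
    by (simp add: sum_distrib_right)
  also have "\<dots> = (\<Sum>f\<in>UNIV. - (\<Sum>e\<in>UNIV. G e * dg e f) * G' f d)"
    by (simp add: h1)
  also have "\<dots> = - (\<Sum>f\<in>UNIV. \<Sum>e\<in>UNIV. G e * dg e f * G' f d)"
    by (simp add: sum_distrib_right sum_negf)
  also have "\<dots> = - (\<Sum>e\<in>UNIV. \<Sum>f\<in>UNIV. G e * dg e f * G' f d)"
    by (subst sum.swap) simp
  finally show ?thesis .
qed

lemma pd_ginv:
  assumes g: "metric_on U g" and U: "open U" "x \<in> U"
  shows "pd (\<lambda>y. ginv g y m d) n x =
     - (\<Sum>e\<in>UNIV. \<Sum>f\<in>UNIV. ginv g x m e * pd (\<lambda>y. g y $ e $ f) n x * ginv g x f d)"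
proof (rule inv_deriv_alg[where g="\<lambda>e f. g x $ e $ f"])
  fix f
  have "pd (\<lambda>y. \<Sum>e\<in>UNIV. ginv g y m e * g y $ e $ f) n x = pd (\<lambda>y. if m = f then 1 else 0) n x"
    by (rule pd_cong[OF U]) (simp add: ginv_left[OF g])
  also have "\<dots> = 0" by (rule pd_const)
  finally have "pd (\<lambda>y. \<Sum>e\<in>UNIV. ginv g y m e * g y $ e $ f) n x = 0" .
  moreover have "pd (\<lambda>y. \<Sum>e\<in>UNIV. ginv g y m e * g y $ e $ f) n x
      = (\<Sum>e\<in>UNIV. pd (\<lambda>y. ginv g y m e) n x * g x $ e $ f + ginv g x m e * pd (\<lambda>y. g y $ e $ f) n x)"
    by (simp add: pd_sum pd_mult differentiable_mult ginv_diff[OF g U] smooth_diff[OF metric_smooth[OF g] U(2)])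
  ultimately show "(\<Sum>e\<in>UNIV. pd (\<lambda>y. ginv g y m e) n x * g x $ e $ f) =
      - (\<Sum>e\<in>UNIV. ginv g x m e * pd (\<lambda>y. g y $ e $ f) n x)"
    by (simp add: sum.distrib eq_neg_iff_add_eq_0)
next
  fix e d show "(\<Sum>f\<in>UNIV. g x $ e $ f * ginv g x f d) = (if e = d then 1 else 0)"
    by (rule ginv_right[OF g U(2)])
qed

lemma npart:
  fixes P :: "'n::finite \<Rightarrow> real" and G :: "'n \<Rightarrow> 'n \<Rightarrow> real" and L :: "'n \<Rightarrow> 'n \<Rightarrow> 'n \<Rightarrow> real"
  assumes P: "\<And>d. P d = - (\<Sum>e\<in>UNIV. \<Sum>f\<in>UNIV. G m e * (L e n f + L f n e) * G f d)"
  shows "(\<Sum>d\<in>UNIV. P d * L d a b) + (\<Sum>l\<in>UNIV. (\<Sum>d\<in>UNIV. G m d * L d n l) * (\<Sum>d\<in>UNIV. G l d * L d a b))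
    = - (\<Sum>p\<in>UNIV. G m p * (\<Sum>f\<in>UNIV. \<Sum>e\<in>UNIV. L f n p * G f e * L e a b))"
proof -
  define C where "C = (\<lambda>f. \<Sum>d\<in>UNIV. G f d * L d a b)"
  have 1: "(\<Sum>d\<in>UNIV. P d * L d a b) = - (\<Sum>e\<in>UNIV. \<Sum>f\<in>UNIV. G m e * (L e n f + L f n e) * C f)"
  proof -
    have "(\<Sum>d\<in>UNIV. P d * L d a b) = - (\<Sum>d\<in>UNIV. \<Sum>e\<in>UNIV. \<Sum>f\<in>UNIV. G m e * (L e n f + L f n e) * G f d * L d a b)"
      by (simp add: P sum_distrib_right sum_negf)
    also have "(\<Sum>d\<in>UNIV. \<Sum>e\<in>UNIV. \<Sum>f\<in>UNIV. G m e * (L e n f + L f n e) * G f d * L d a b)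
       = (\<Sum>e\<in>UNIV. \<Sum>d\<in>UNIV. \<Sum>f\<in>UNIV. G m e * (L e n f + L f n e) * G f d * L d a b)"
      by (rule sum.swap)
    also have "\<dots> = (\<Sum>e\<in>UNIV. \<Sum>f\<in>UNIV. \<Sum>d\<in>UNIV. G m e * (L e n f + L f n e) * G f d * L d a b)"
      by (rule sum.cong[OF refl], rule sum.swap)
    also have "\<dots> = (\<Sum>e\<in>UNIV. \<Sum>f\<in>UNIV. G m e * (L e n f + L f n e) * C f)"
      by (simp add: C_def sum_distrib_left mult.assoc)
    finally show ?thesis .
  qed
  have 2: "(\<Sum>l\<in>UNIV. (\<Sum>d\<in>UNIV. G m d * L d n l) * C l) = (\<Sum>e\<in>UNIV. \<Sum>f\<in>UNIV. G m e * L e n f * C f)"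
  proof -
    have "(\<Sum>l\<in>UNIV. (\<Sum>d\<in>UNIV. G m d * L d n l) * C l) = (\<Sum>l\<in>UNIV. \<Sum>d\<in>UNIV. G m d * L d n l * C l)"
      by (simp add: sum_distrib_right)
    also have "\<dots> = (\<Sum>e\<in>UNIV. \<Sum>f\<in>UNIV. G m e * L e n f * C f)" by (rule sum.swap)
    finally show ?thesis .
  qed
  have 3: "(\<Sum>e\<in>UNIV. \<Sum>f\<in>UNIV. G m e * L f n e * C f) = (\<Sum>p\<in>UNIV. G m p * (\<Sum>f\<in>UNIV. \<Sum>e\<in>UNIV. L f n p * G f e * L e a b))"
    by (simp add: C_def sum_distrib_left mult.assoc)
  have "(\<Sum>d\<in>UNIV. P d * L d a b) + (\<Sum>l\<in>UNIV. (\<Sum>d\<in>UNIV. G m d * L d n l) * (\<Sum>d\<in>UNIV. G l d * L d a b))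
     = - (\<Sum>e\<in>UNIV. \<Sum>f\<in>UNIV. G m e * (L e n f + L f n e) * C f) + (\<Sum>e\<in>UNIV. \<Sum>f\<in>UNIV. G m e * L e n f * C f)"
    using 1 2 by (simp add: C_def)
  also have "\<dots> = - (\<Sum>e\<in>UNIV. \<Sum>f\<in>UNIV. G m e * L f n e * C f)"
    by (simp add: algebra_simps sum.distrib)
  finally show ?thesis using 3 by simp
qed


definition Lc :: "(real^'n \<Rightarrow> real^'n^'n) \<Rightarrow> real^'n \<Rightarrow> 'n \<Rightarrow> 'n \<Rightarrow> 'n \<Rightarrow> real" where
  "Lc g y d b c = 1/2 * (pd (\<lambda>z. g z $ d $ c) b y + pd (\<lambda>z. g z $ d $ b) c y - pd (\<lambda>z. g z $ b $ c) d y)"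

lemma chr_Lc: "chr g y a b c = (\<Sum>d\<in>UNIV. ginv g y a d * Lc g y d b c)"
  unfolding chr_def Lc_def by (simp add: sum_distrib_left algebra_simps)

lemma pd_gsym: "metric_on U g \<Longrightarrow> open U \<Longrightarrow> y \<in> U \<Longrightarrow>
    pd (\<lambda>z. g z $ a $ b) c y = pd (\<lambda>z. g z $ b $ a) c y"
  by (rule pd_cong) (auto intro: metric_sym)

lemma dg_Lc: "metric_on U g \<Longrightarrow> open U \<Longrightarrow> y \<in> U \<Longrightarrow>
    pd (\<lambda>z. g z $ e $ f) n y = Lc g y e n f + Lc g y f n e"
  unfolding Lc_def
  using pd_gsym[of U g y e f n] pd_gsym[of U g y e n f] pd_gsym[of U g y n f e]
  by (simp add: algebra_simps)

lemma Lc_sym: "metric_on U g \<Longrightarrow> open U \<Longrightarrow> y \<in> U \<Longrightarrow> Lc g y e a b = Lc g y e b a"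
  unfolding Lc_def using pd_gsym[of U g y a b e] by (simp add: algebra_simps)

lemma Lc_diff: "metric_on U g \<Longrightarrow> x \<in> U \<Longrightarrow> (\<lambda>y. Lc g y d b c) differentiable (at x)"
  unfolding Lc_def
  by (intro differentiable_mult differentiable_const differentiable_add differentiable_diff
        smooth_diff[OF smooth_pd[OF metric_smooth]]) auto

lemma pd_chr:
  assumes g: "metric_on U g" and U: "open U" "x \<in> U"
  shows "pd (\<lambda>y. chr g y m a b) n x = (\<Sum>d\<in>UNIV. pd (\<lambda>y. ginv g y m d) n x * Lc g x d a b
        + ginv g x m d * pd (\<lambda>y. Lc g y d a b) n x)"
  unfolding chr_Lc
  by (simp add: pd_sum pd_mult differentiable_mult ginv_diff[OF g U] Lc_diff[OF g U(2)])

lemma riem_formula: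
  assumes g: "metric_on U g" and U: "open U" "x \<in> U"
  shows "riem g x m a n b = (\<Sum>p\<in>UNIV. ginv g x m p *
     (pd (\<lambda>y. Lc g y p a b) n x - pd (\<lambda>y. Lc g y p a n) b x
     - (\<Sum>f\<in>UNIV. \<Sum>e\<in>UNIV. Lc g x f n p * ginv g x f e * Lc g x e a b)
     + (\<Sum>f\<in>UNIV. \<Sum>e\<in>UNIV. Lc g x f b p * ginv g x f e * Lc g x e a n)))"
proof -
  define G where "G = ginv g x"
  define L where "L = Lc g x"
  define dL where "dL = (\<lambda>n p a b. pd (\<lambda>y. Lc g y p a b) n x)"
  have P: "pd (\<lambda>y. ginv g y m d) n' x = - (\<Sum>e\<in>UNIV. \<Sum>f\<in>UNIV. G m e * (L e n' f + L f n' e) * G f d)" for d n'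
    unfolding pd_ginv[OF g U] G_def L_def dg_Lc[OF g U] ..
  have A: "pd (\<lambda>y. chr g y m a b) n x = (\<Sum>d\<in>UNIV. pd (\<lambda>y. ginv g y m d) n x * L d a b)
       + (\<Sum>d\<in>UNIV. G m d * dL n d a b)"
    unfolding pd_chr[OF g U] G_def L_def dL_def by (simp add: sum.distrib)
  have B: "pd (\<lambda>y. chr g y m a n) b x = (\<Sum>d\<in>UNIV. pd (\<lambda>y. ginv g y m d) b x * L d a n)
       + (\<Sum>d\<in>UNIV. G m d * dL b d a n)"
    unfolding pd_chr[OF g U] G_def L_def dL_def by (simp add: sum.distrib)
  have C: "(\<Sum>l\<in>UNIV. chr g x m n l * chr g x l a b - chr g x m b l * chr g x l a n)
     = (\<Sum>l\<in>UNIV. (\<Sum>d\<in>UNIV. G m d * L d n l) * (\<Sum>d\<in>UNIV. G l d * L d a b))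
     - (\<Sum>l\<in>UNIV. (\<Sum>d\<in>UNIV. G m d * L d b l) * (\<Sum>d\<in>UNIV. G l d * L d a n))"
    unfolding chr_Lc G_def L_def by (simp add: sum_subtractf)
  have N1: "(\<Sum>d\<in>UNIV. pd (\<lambda>y. ginv g y m d) n x * L d a b) + (\<Sum>l\<in>UNIV. (\<Sum>d\<in>UNIV. G m d * L d n l) * (\<Sum>d\<in>UNIV. G l d * L d a b))
    = - (\<Sum>p\<in>UNIV. G m p * (\<Sum>f\<in>UNIV. \<Sum>e\<in>UNIV. L f n p * G f e * L e a b))"
    by (rule npart[OF P])
  have N2: "(\<Sum>d\<in>UNIV. pd (\<lambda>y. ginv g y m d) b x * L d a n) + (\<Sum>l\<in>UNIV. (\<Sum>d\<in>UNIV. G m d * L d b l) * (\<Sum>d\<in>UNIV. G l d * L d a n))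
    = - (\<Sum>p\<in>UNIV. G m p * (\<Sum>f\<in>UNIV. \<Sum>e\<in>UNIV. L f b p * G f e * L e a n))"
    by (rule npart[OF P])
  have "riem g x m a n b = ((\<Sum>d\<in>UNIV. pd (\<lambda>y. ginv g y m d) n x * L d a b) + (\<Sum>l\<in>UNIV. (\<Sum>d\<in>UNIV. G m d * L d n l) * (\<Sum>d\<in>UNIV. G l d * L d a b)))
     - ((\<Sum>d\<in>UNIV. pd (\<lambda>y. ginv g y m d) b x * L d a n) + (\<Sum>l\<in>UNIV. (\<Sum>d\<in>UNIV. G m d * L d b l) * (\<Sum>d\<in>UNIV. G l d * L d a n)))
     + (\<Sum>d\<in>UNIV. G m d * dL n d a b) - (\<Sum>d\<in>UNIV. G m d * dL b d a n)"
    unfolding riem_def A B C by simp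
  also have "\<dots> = (\<Sum>p\<in>UNIV. G m p * (dL n p a b - dL b p a n
     - (\<Sum>f\<in>UNIV. \<Sum>e\<in>UNIV. L f n p * G f e * L e a b)
     + (\<Sum>f\<in>UNIV. \<Sum>e\<in>UNIV. L f b p * G f e * L e a n)))"
    unfolding N1 N2 by (simp add: algebra_simps sum.distrib sum_subtractf)
  finally show ?thesis unfolding G_def L_def dL_def .
qed



definition negl :: "('n::finite \<Rightarrow> real) \<Rightarrow> ('n \<Rightarrow> 'n \<Rightarrow> 'n \<Rightarrow> 'n \<Rightarrow> real) \<Rightarrow> bool" where
  "negl kk F \<longleftrightarrow> (\<exists>X1 X2 X3 X4. \<forall>p n a b. F p n a b =
      kk p * X1 n a b + kk n * X2 p a b + kk a * X3 p n b + kk b * X4 p n a)"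

definition Pj :: "('n::finite \<Rightarrow> real) \<Rightarrow> ('n \<Rightarrow> real) \<Rightarrow> ('n \<Rightarrow> real) \<Rightarrow> ('n \<Rightarrow> real)
   \<Rightarrow> ('n \<Rightarrow> 'n \<Rightarrow> 'n \<Rightarrow> 'n \<Rightarrow> real) \<Rightarrow> real" where
  "Pj q v u w F = (\<Sum>p\<in>UNIV. \<Sum>n\<in>UNIV. \<Sum>a\<in>UNIV. \<Sum>b\<in>UNIV. q p * v n * u a * w b * F p n a b)"

lemma negl_I:
  assumes "\<And>p n a b. F p n a b = kk p * XA n a b + kk n * XB p a b + kk a * XC p n b + kk b * XD p n a"
  shows "negl kk F"
  unfolding negl_def using assms by blast

lemma negl_add:
  assumes "negl kk F" "negl kk F'" shows "negl kk (\<lambda>p n a b. F p n a b + F' p n a b)"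
proof -
  obtain X1 X2 X3 X4 where X: "\<And>p n a b. F p n a b =
      kk p * X1 n a b + kk n * X2 p a b + kk a * X3 p n b + kk b * X4 p n a"
    using assms(1) unfolding negl_def by blast
  obtain Y1 Y2 Y3 Y4 where Y: "\<And>p n a b. F' p n a b =
      kk p * Y1 n a b + kk n * Y2 p a b + kk a * Y3 p n b + kk b * Y4 p n a"
    using assms(2) unfolding negl_def by blast
  show ?thesis
    by (rule negl_I[where XA="\<lambda>n a b. X1 n a b + Y1 n a b" and XB="\<lambda>n a b. X2 n a b + Y2 n a b"
        and XC="\<lambda>n a b. X3 n a b + Y3 n a b" and XD="\<lambda>n a b. X4 n a b + Y4 n a b"])
       (simp add: X Y algebra_simps)
qed

lemma negl_neg:
  assumes "negl kk F" shows "negl kk (\<lambda>p n a b. - F p n a b)"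
proof -
  obtain X1 X2 X3 X4 where X: "\<And>p n a b. F p n a b =
      kk p * X1 n a b + kk n * X2 p a b + kk a * X3 p n b + kk b * X4 p n a"
    using assms(1) unfolding negl_def by blast
  show ?thesis
    by (rule negl_I[where XA="\<lambda>n a b. - X1 n a b" and XB="\<lambda>n a b. - X2 n a b"
        and XC="\<lambda>n a b. - X3 n a b" and XD="\<lambda>n a b. - X4 n a b"])
       (simp add: X algebra_simps)
qed

lemma negl_diff:
  assumes "negl kk F" "negl kk F'" shows "negl kk (\<lambda>p n a b. F p n a b - F' p n a b)"
  using negl_add[OF assms(1) negl_neg[OF assms(2)]] by simp

lemma negl_cong: "negl kk F \<Longrightarrow> (\<And>p n a b. F' p n a b = F p n a b) \<Longrightarrow> negl kk F'"
  by (metis ext)  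

lemma Pj_add: "Pj q v u w (\<lambda>p n a b. F p n a b + F' p n a b) = Pj q v u w F + Pj q v u w F'"
  unfolding Pj_def by (simp add: algebra_simps sum.distrib)

lemma Pj_zero:
  assumes "negl kk F" and qk: "(\<Sum>p\<in>UNIV. q p * kk p) = 0" and vk: "(\<Sum>p\<in>UNIV. v p * kk p) = 0"
    and uk: "(\<Sum>p\<in>UNIV. u p * kk p) = 0" and wk: "(\<Sum>p\<in>UNIV. w p * kk p) = 0"
  shows "Pj q v u w F = 0"
proof -
  obtain X1 X2 X3 X4 where F: "\<And>p n a b. F p n a b =
      kk p * X1 n a b + kk n * X2 p a b + kk a * X3 p n b + kk b * X4 p n a"
    using assms(1) unfolding negl_def by blast
  have 1: "Pj q v u w (\<lambda>p n a b. kk p * X1 n a b) = 0"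
  proof -
    have "Pj q v u w (\<lambda>p n a b. kk p * X1 n a b) = 
      (\<Sum>p\<in>UNIV. q p * kk p * (\<Sum>n\<in>UNIV. \<Sum>a\<in>UNIV. \<Sum>b\<in>UNIV. v n * u a * w b * X1 n a b))"
      unfolding Pj_def by (simp add: sum_distrib_left algebra_simps)
    also have "\<dots> = 0" by (simp add: sum_distrib_right[symmetric] qk)
    finally show ?thesis .
  qed
  have 2: "Pj q v u w (\<lambda>p n a b. kk n * X2 p a b) = 0"
  proof -
    have "Pj q v u w (\<lambda>p n a b. kk n * X2 p a b) = 
      (\<Sum>p\<in>UNIV. \<Sum>n\<in>UNIV. v n * kk n * (q p * (\<Sum>a\<in>UNIV. \<Sum>b\<in>UNIV. u a * w b * X2 p a b)))"
      unfolding Pj_def by (simp add: sum_distrib_left algebra_simps)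
    also have "\<dots> = 0" by (simp add: sum_distrib_right[symmetric] vk)
    finally show ?thesis .
  qed
  have 3: "Pj q v u w (\<lambda>p n a b. kk a * X3 p n b) = 0"
  proof -
    have "Pj q v u w (\<lambda>p n a b. kk a * X3 p n b) = 
      (\<Sum>p\<in>UNIV. \<Sum>n\<in>UNIV. \<Sum>a\<in>UNIV. u a * kk a * (q p * v n * (\<Sum>b\<in>UNIV. w b * X3 p n b)))"
      unfolding Pj_def by (simp add: sum_distrib_left algebra_simps)
    also have "\<dots> = 0" by (simp add: sum_distrib_right[symmetric] uk)
    finally show ?thesis .
  qed
  have 4: "Pj q v u w (\<lambda>p n a b. kk b * X4 p n a) = 0"
  proof -
    have "Pj q v u w (\<lambda>p n a b. kk b * X4 p n a) = 
      (\<Sum>p\<in>UNIV. \<Sum>n\<in>UNIV. \<Sum>a\<in>UNIV. \<Sum>b\<in>UNIV. w b * kk b * (q p * v n * u a * X4 p n a))"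
      unfolding Pj_def by (simp add: algebra_simps)
    also have "\<dots> = 0" by (simp add: sum_distrib_right[symmetric] wk)
    finally show ?thesis .
  qed
  have "F = (\<lambda>p n a b. kk p * X1 n a b + kk n * X2 p a b + kk a * X3 p n b + kk b * X4 p n a)"
    using F by (intro ext) simp
  then show ?thesis using 1 2 3 4 by (simp add: Pj_add)
qed

lemma quad1:
  fixes M1 A1 B1 M2 A2 B2 :: "'n::finite \<Rightarrow> real" and Gh :: "'n \<Rightarrow> 'n \<Rightarrow> real"
  shows "(\<Sum>f\<in>UNIV. \<Sum>e\<in>UNIV. (M1 f - c1 * A1 f - c2 * B1 f) * Gh f e * (M2 e - c3 * A2 e - c4 * B2 e))
   = (\<Sum>f\<in>UNIV. \<Sum>e\<in>UNIV. M1 f * Gh f e * M2 e)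
     - c1 * (\<Sum>f\<in>UNIV. \<Sum>e\<in>UNIV. A1 f * Gh f e * (M2 e - c3 * A2 e - c4 * B2 e))
     - c2 * (\<Sum>f\<in>UNIV. \<Sum>e\<in>UNIV. B1 f * Gh f e * (M2 e - c3 * A2 e - c4 * B2 e))
     - c3 * (\<Sum>f\<in>UNIV. \<Sum>e\<in>UNIV. M1 f * Gh f e * A2 e)
     - c4 * (\<Sum>f\<in>UNIV. \<Sum>e\<in>UNIV. M1 f * Gh f e * B2 e)"
  by (simp add: sum_distrib_left sum_subtractf[symmetric] sum.distrib[symmetric] algebra_simps)

lemma quad2:
  fixes L1 L2 kk K :: "'n::finite \<Rightarrow> real" and G :: "'n \<Rightarrow> 'n \<Rightarrow> real"
  assumes Gsym: "\<And>a b. G a b = G b a" and K: "\<And>a. K a = (\<Sum>b\<in>UNIV. G a b * kk b)"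
    and null: "(\<Sum>a\<in>UNIV. kk a * K a) = 0"
  shows "(\<Sum>f\<in>UNIV. \<Sum>e\<in>UNIV. (L1 f - c * kk f) * (G f e + Hx * K f * K e) * (L2 e - d * kk e))
   = (\<Sum>f\<in>UNIV. \<Sum>e\<in>UNIV. L1 f * G f e * L2 e) - c * (\<Sum>e\<in>UNIV. K e * L2 e)
     - d * (\<Sum>e\<in>UNIV. K e * L1 e) + Hx * (\<Sum>e\<in>UNIV. K e * L1 e) * (\<Sum>e\<in>UNIV. K e * L2 e)"
proof -
  have nk: "(\<Sum>a\<in>UNIV. K a * kk a) = 0" using null by (simp add: mult.commute)
  have e1: "(\<Sum>f\<in>UNIV. kk f * G f e) = K e" for e
    by (simp add: K Gsym mult.commute)
  have e2: "(\<Sum>e\<in>UNIV. G f e * kk e) = K f" for f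
    by (simp add: K)
  have s1: "(\<Sum>e\<in>UNIV. G f e * (L2 e - d * kk e)) = (\<Sum>e\<in>UNIV. G f e * L2 e) - d * K f" for f
    by (simp add: algebra_simps sum_subtractf sum_distrib_left K)
  have s2: "(\<Sum>f\<in>UNIV. kk f * (\<Sum>e\<in>UNIV. G f e * L2 e)) = (\<Sum>e\<in>UNIV. K e * L2 e)"
  proof -
    have "(\<Sum>f\<in>UNIV. kk f * (\<Sum>e\<in>UNIV. G f e * L2 e)) = (\<Sum>f\<in>UNIV. \<Sum>e\<in>UNIV. kk f * G f e * L2 e)"
      by (simp add: sum_distrib_left mult.assoc)
    also have "\<dots> = (\<Sum>e\<in>UNIV. \<Sum>f\<in>UNIV. kk f * G f e * L2 e)"
      by (rule sum.swap)
    also have "\<dots> = (\<Sum>e\<in>UNIV. (\<Sum>f\<in>UNIV. kk f * G f e) * L2 e)"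
      by (simp add: sum_distrib_right)
    finally show ?thesis by (simp add: e1)
  qed
  have t1: "(\<Sum>f\<in>UNIV. \<Sum>e\<in>UNIV. (L1 f - c * kk f) * (G f e + Hx * K f * K e) * (L2 e - d * kk e))
      = (\<Sum>f\<in>UNIV. (L1 f - c * kk f) * (\<Sum>e\<in>UNIV. G f e * (L2 e - d * kk e)))
       + Hx * ((\<Sum>f\<in>UNIV. (L1 f - c * kk f) * K f) * (\<Sum>e\<in>UNIV. K e * (L2 e - d * kk e)))"
  proof -
    have "(\<Sum>f\<in>UNIV. \<Sum>e\<in>UNIV. (L1 f - c * kk f) * (G f e + Hx * K f * K e) * (L2 e - d * kk e))
      = (\<Sum>f\<in>UNIV. \<Sum>e\<in>UNIV. (L1 f - c * kk f) * (G f e * (L2 e - d * kk e))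
          + Hx * (((L1 f - c * kk f) * K f) * (K e * (L2 e - d * kk e))))"
      by (rule sum.cong[OF refl], rule sum.cong[OF refl]) (simp add: algebra_simps)
    also have "\<dots> = (\<Sum>f\<in>UNIV. (L1 f - c * kk f) * (\<Sum>e\<in>UNIV. G f e * (L2 e - d * kk e)))
       + Hx * (\<Sum>f\<in>UNIV. \<Sum>e\<in>UNIV. ((L1 f - c * kk f) * K f) * (K e * (L2 e - d * kk e)))"
      by (simp add: sum.distrib sum_distrib_left)
    also have "(\<Sum>f\<in>UNIV. \<Sum>e\<in>UNIV. ((L1 f - c * kk f) * K f) * (K e * (L2 e - d * kk e)))
       = (\<Sum>f\<in>UNIV. (L1 f - c * kk f) * K f) * (\<Sum>e\<in>UNIV. K e * (L2 e - d * kk e))"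
      by (rule sum_product[symmetric])
    finally show ?thesis .
  qed
  have t2: "(\<Sum>f\<in>UNIV. (L1 f - c * kk f) * K f) = (\<Sum>e\<in>UNIV. K e * L1 e)"
    using null by (simp add: algebra_simps sum_subtractf sum_distrib_left[symmetric])
  have t3: "(\<Sum>e\<in>UNIV. K e * (L2 e - d * kk e)) = (\<Sum>e\<in>UNIV. K e * L2 e)"
    using nk by (simp add: algebra_simps sum_subtractf sum_distrib_left[symmetric])
  have t4: "(\<Sum>f\<in>UNIV. (L1 f - c * kk f) * (\<Sum>e\<in>UNIV. G f e * (L2 e - d * kk e)))
     = (\<Sum>f\<in>UNIV. L1 f * (\<Sum>e\<in>UNIV. G f e * L2 e)) - d * (\<Sum>f\<in>UNIV. K f * L1 f)
       - c * (\<Sum>f\<in>UNIV. kk f * (\<Sum>e\<in>UNIV. G f e * L2 e)) + c * d * (\<Sum>f\<in>UNIV. kk f * K f)"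
  proof -
    have "(\<Sum>f\<in>UNIV. (L1 f - c * kk f) * (\<Sum>e\<in>UNIV. G f e * (L2 e - d * kk e)))
      = (\<Sum>f\<in>UNIV. (L1 f - c * kk f) * ((\<Sum>e\<in>UNIV. G f e * L2 e) - d * K f))"
      by (simp only: s1)
    also have "\<dots> = (\<Sum>f\<in>UNIV. L1 f * (\<Sum>e\<in>UNIV. G f e * L2 e) - d * (K f * L1 f)
       - c * (kk f * (\<Sum>e\<in>UNIV. G f e * L2 e)) + c * d * (kk f * K f))"
      by (rule sum.cong[OF refl]) (simp add: algebra_simps)
    finally show ?thesis by (simp only: sum.distrib sum_subtractf sum_distrib_left[symmetric])
  qed
  have t5: "(\<Sum>f\<in>UNIV. L1 f * (\<Sum>e\<in>UNIV. G f e * L2 e)) = (\<Sum>f\<in>UNIV. \<Sum>e\<in>UNIV. L1 f * G f e * L2 e)"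
    by (simp add: sum_distrib_left mult.assoc)
  show ?thesis unfolding t1 t2 t3 t4 t5 s2 null by (simp add: algebra_simps)
qed


definition Ef :: "('n \<Rightarrow> real) \<Rightarrow> real \<Rightarrow> ('n \<Rightarrow> real) \<Rightarrow> ('n \<Rightarrow> 'n \<Rightarrow> real) \<Rightarrow> 'n \<Rightarrow> 'n \<Rightarrow> 'n \<Rightarrow> real" where
  "Ef kk Hx dH dk c x y = dH c * kk x * kk y + Hx * dk c x * kk y + Hx * kk x * dk c y"

definition Ff :: "('n \<Rightarrow> real) \<Rightarrow> real \<Rightarrow> ('n \<Rightarrow> real) \<Rightarrow> ('n \<Rightarrow> 'n \<Rightarrow> real) \<Rightarrow> ('n \<Rightarrow> 'n \<Rightarrow> real)
   \<Rightarrow> ('n \<Rightarrow> 'n \<Rightarrow> 'n \<Rightarrow> real) \<Rightarrow> 'n \<Rightarrow> 'n \<Rightarrow> 'n \<Rightarrow> 'n \<Rightarrow> real" where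
  "Ff kk Hx dH ddH dk ddk n c x y =
     ddH n c * kk x * kk y + dH c * dk n x * kk y + dH c * kk x * dk n y
   + dH n * dk c x * kk y + Hx * ddk n c x * kk y + Hx * dk c x * dk n y
   + dH n * kk x * dk c y + Hx * dk n x * dk c y + Hx * kk x * ddk n c y"

definition Rl :: "('n::finite \<Rightarrow> 'n \<Rightarrow> 'n \<Rightarrow> real) \<Rightarrow> ('n \<Rightarrow> 'n \<Rightarrow> 'n \<Rightarrow> 'n \<Rightarrow> real) \<Rightarrow> ('n \<Rightarrow> 'n \<Rightarrow> real)
    \<Rightarrow> 'n \<Rightarrow> 'n \<Rightarrow> 'n \<Rightarrow> 'n \<Rightarrow> real" where
  "Rl L dL G p n a b = dL n p a b - dL b p a n
     - (\<Sum>f\<in>UNIV. \<Sum>e\<in>UNIV. L f n p * G f e * L e a b)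
     + (\<Sum>f\<in>UNIV. \<Sum>e\<in>UNIV. L f b p * G f e * L e a n)"

definition Tt :: "('n \<Rightarrow> 'n \<Rightarrow> real) \<Rightarrow> 'n \<Rightarrow> 'n \<Rightarrow> 'n \<Rightarrow> 'n \<Rightarrow> real" where
  "Tt cv p n a b = (1/4) * (cv n p * cv a b - cv b p * cv a n - cv n a * cv p b + cv b a * cv p n)
             + (1/4) * (cv n b - cv b n) * (cv a p - cv p a)"

lemma Pj_lin: "Pj q v u w (\<lambda>p n a b. F p n a b - F' p n a b + c * F'' p n a b)
   = Pj q v u w F - Pj q v u w F' + c * Pj q v u w F''"
  unfolding Pj_def by (simp add: algebra_simps sum.distrib sum_subtractf sum_distrib_left)

lemma core:
  fixes kk dH :: "'n::finite \<Rightarrow> real" and Hx :: real and ddH dk G :: "'n \<Rightarrow> 'n \<Rightarrow> real"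
    and ddk L :: "'n \<Rightarrow> 'n \<Rightarrow> 'n \<Rightarrow> real" and dL :: "'n \<Rightarrow> 'n \<Rightarrow> 'n \<Rightarrow> 'n \<Rightarrow> real"
    and q v u w :: "'n \<Rightarrow> real"
  assumes Gsym: "\<And>a b. G a b = G b a" and Lsym: "\<And>e a b. L e a b = L e b a"
    and null0: "(\<Sum>a\<in>UNIV. \<Sum>b\<in>UNIV. G a b * kk a * kk b) = 0"
    and qk: "(\<Sum>p\<in>UNIV. q p * kk p) = 0" and vk: "(\<Sum>p\<in>UNIV. v p * kk p) = 0"
    and uk: "(\<Sum>p\<in>UNIV. u p * kk p) = 0" and wk: "(\<Sum>p\<in>UNIV. w p * kk p) = 0"
  defines "K \<equiv> \<lambda>a. \<Sum>b\<in>UNIV. G a b * kk b"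
    and "Dd \<equiv> \<lambda>p a b. 1/2 * (Ef kk Hx dH dk a p b + Ef kk Hx dH dk b p a - Ef kk Hx dH dk p a b)"
    and "dDd \<equiv> \<lambda>n p a b. 1/2 * (Ff kk Hx dH ddH dk ddk n a p b + Ff kk Hx dH ddH dk ddk n b p a
                                 - Ff kk Hx dH ddH dk ddk n p a b)"
    and "cv \<equiv> \<lambda>a b. dk a b - (\<Sum>e\<in>UNIV. (\<Sum>b\<in>UNIV. G e b * kk b) * L e a b)"
  shows "Pj q v u w (Rl (\<lambda>p a b. L p a b - Dd p a b) (\<lambda>n p a b. dL n p a b - dDd n p a b)
            (\<lambda>f e. G f e + Hx * K f * K e))
         = Pj q v u w (Rl L dL G) - 2 * Hx * Pj q v u w (Tt cv)"
proof -
  define Gh where "Gh = (\<lambda>f e. G f e + Hx * K f * K e)"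
  define Lh where "Lh = (\<lambda>p a b. L p a b - Dd p a b)"
  define dLh where "dLh = (\<lambda>n p a b. dL n p a b - dDd n p a b)"
  define Dm where "Dm = (\<lambda>f n p. Hx/2 * (dk n p + dk p n) * kk f)"
  define M where "M = (\<lambda>f n p. L f n p - Dm f n p)"
  define Aa where "Aa = (\<lambda>f n. 1/2 * (dH n * kk f + Hx * dk n f - dH f * kk n - Hx * dk f n))"
  define Bb where "Bb = (\<lambda>f p. 1/2 * (dH p * kk f + Hx * dk p f - Hx * dk f p))"
  define Fm where "Fm = (\<lambda>n c x y. Hx * (dk c x * dk n y + dk n x * dk c y))"
  define dDm where "dDm = (\<lambda>n p a b. 1/2 * (Fm n a p b + Fm n b p a - Fm n p a b))"
  define Bs where "Bs = (\<lambda>x y. \<Sum>e\<in>UNIV. K e * L e x y)"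
  define Qf :: "('n \<Rightarrow> 'n \<Rightarrow> 'n \<Rightarrow> real) \<Rightarrow> ('n \<Rightarrow> 'n \<Rightarrow> real) \<Rightarrow> 'n \<Rightarrow> 'n \<Rightarrow> 'n \<Rightarrow> 'n \<Rightarrow> real"
    where "Qf = (\<lambda>X Y n p a b. \<Sum>f\<in>UNIV. \<Sum>e\<in>UNIV. X f n p * Y f e * X e a b)"
  have null: "(\<Sum>a\<in>UNIV. kk a * K a) = 0"
    using null0 unfolding K_def by (simp add: sum_distrib_left algebra_simps)
  have Bsym: "Bs x y = Bs y x" for x y unfolding Bs_def by (simp add: Lsym)
  have Lh_dec: "Lh f n p = M f n p - kk p * Aa f n - kk n * Bb f p" for f n p
    unfolding Lh_def M_def Dd_def Dm_def Aa_def Bb_def Ef_def by (simp add: algebra_simps)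
  have Rl_eq: "Rl Lh dLh Gh p n a b = dLh n p a b - dLh b p a n - Qf Lh Gh n p a b + Qf Lh Gh b p a n"
    for p n a b unfolding Rl_def Qf_def ..
  have Rl_eq0: "Rl L dL G p n a b = dL n p a b - dL b p a n - Qf L G n p a b + Qf L G b p a n"
    for p n a b unfolding Rl_def Qf_def ..
  define Phi where "Phi = (\<lambda>n c x. ddH n c * kk x + dH c * dk n x + dH n * dk c x + Hx * ddk n c x)"
  define Psi where "Psi = (\<lambda>n c y. dH c * dk n y + dH n * dk c y + Hx * ddk n c y)"
  have N1: "negl kk (\<lambda>p n a b. (dDd n p a b - dDd b p a n) - (dDm n p a b - dDm b p a n))"
    apply (rule negl_I[where XA="\<lambda>n a b. 1/2 * (Psi n a b + Psi n b a - Psi b a n - Psi b n a)"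
          and XB="\<lambda>p a b. - 1/2 * (Phi b a p - Phi b p a)"
          and XC="\<lambda>p n b. 1/2 * (Phi n b p - Psi n p b - Phi b n p + Psi b p n)"
          and XD="\<lambda>p n a. 1/2 * (Phi n a p - Phi n p a)"])
    unfolding dDd_def dDm_def Fm_def Ff_def Phi_def Psi_def by (simp add: algebra_simps)
  have N2: "negl kk (\<lambda>p n a b. Qf Lh Gh n p a b - Qf M Gh n p a b)"
  proof (rule negl_I[where XA="\<lambda>n a b. - (\<Sum>f\<in>UNIV. \<Sum>e\<in>UNIV. Aa f n * Gh f e * Lh e a b)"
          and XB="\<lambda>p a b. - (\<Sum>f\<in>UNIV. \<Sum>e\<in>UNIV. Bb f p * Gh f e * Lh e a b)"
          and XC="\<lambda>p n b. - (\<Sum>f\<in>UNIV. \<Sum>e\<in>UNIV. M f n p * Gh f e * Bb e b)"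
          and XD="\<lambda>p n a. - (\<Sum>f\<in>UNIV. \<Sum>e\<in>UNIV. M f n p * Gh f e * Aa e a)"])
    fix p n a b
    have "Qf Lh Gh n p a b = (\<Sum>f\<in>UNIV. \<Sum>e\<in>UNIV. (M f n p - kk p * Aa f n - kk n * Bb f p) * Gh f e
             * (M e a b - kk b * Aa e a - kk a * Bb e b))"
      unfolding Qf_def Lh_dec ..
    also have "\<dots> = Qf M Gh n p a b
     - kk p * (\<Sum>f\<in>UNIV. \<Sum>e\<in>UNIV. Aa f n * Gh f e * (M e a b - kk b * Aa e a - kk a * Bb e b))
     - kk n * (\<Sum>f\<in>UNIV. \<Sum>e\<in>UNIV. Bb f p * Gh f e * (M e a b - kk b * Aa e a - kk a * Bb e b))
     - kk b * (\<Sum>f\<in>UNIV. \<Sum>e\<in>UNIV. M f n p * Gh f e * Aa e a)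
     - kk a * (\<Sum>f\<in>UNIV. \<Sum>e\<in>UNIV. M f n p * Gh f e * Bb e b)"
      unfolding Qf_def by (rule quad1)
    finally show "Qf Lh Gh n p a b - Qf M Gh n p a b =
         kk p * - (\<Sum>f\<in>UNIV. \<Sum>e\<in>UNIV. Aa f n * Gh f e * Lh e a b) +
         kk n * - (\<Sum>f\<in>UNIV. \<Sum>e\<in>UNIV. Bb f p * Gh f e * Lh e a b) +
         kk a * - (\<Sum>f\<in>UNIV. \<Sum>e\<in>UNIV. M f n p * Gh f e * Bb e b) +
         kk b * - (\<Sum>f\<in>UNIV. \<Sum>e\<in>UNIV. M f n p * Gh f e * Aa e a)"
      unfolding Lh_dec by (simp add: algebra_simps)
  qed
  have N3: "negl kk (\<lambda>p n a b. Qf Lh Gh b p a n - Qf M Gh b p a n)"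
  proof (rule negl_I[where XA="\<lambda>n a b. - (\<Sum>f\<in>UNIV. \<Sum>e\<in>UNIV. Aa f b * Gh f e * Lh e a n)"
          and XD="\<lambda>p n a. - (\<Sum>f\<in>UNIV. \<Sum>e\<in>UNIV. Bb f p * Gh f e * Lh e a n)"
          and XC="\<lambda>p n b. - (\<Sum>f\<in>UNIV. \<Sum>e\<in>UNIV. M f b p * Gh f e * Bb e n)"
          and XB="\<lambda>p a b. - (\<Sum>f\<in>UNIV. \<Sum>e\<in>UNIV. M f b p * Gh f e * Aa e a)"])
    fix p n a b
    have "Qf Lh Gh b p a n = (\<Sum>f\<in>UNIV. \<Sum>e\<in>UNIV. (M f b p - kk p * Aa f b - kk b * Bb f p) * Gh f e
             * (M e a n - kk n * Aa e a - kk a * Bb e n))"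
      unfolding Qf_def Lh_dec ..
    also have "\<dots> = Qf M Gh b p a n
     - kk p * (\<Sum>f\<in>UNIV. \<Sum>e\<in>UNIV. Aa f b * Gh f e * (M e a n - kk n * Aa e a - kk a * Bb e n))
     - kk b * (\<Sum>f\<in>UNIV. \<Sum>e\<in>UNIV. Bb f p * Gh f e * (M e a n - kk n * Aa e a - kk a * Bb e n))
     - kk n * (\<Sum>f\<in>UNIV. \<Sum>e\<in>UNIV. M f b p * Gh f e * Aa e a)
     - kk a * (\<Sum>f\<in>UNIV. \<Sum>e\<in>UNIV. M f b p * Gh f e * Bb e n)"
      unfolding Qf_def by (rule quad1)
    finally show "Qf Lh Gh b p a n - Qf M Gh b p a n =
         kk p * - (\<Sum>f\<in>UNIV. \<Sum>e\<in>UNIV. Aa f b * Gh f e * Lh e a n) +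
         kk n * - (\<Sum>f\<in>UNIV. \<Sum>e\<in>UNIV. M f b p * Gh f e * Aa e a) +
         kk a * - (\<Sum>f\<in>UNIV. \<Sum>e\<in>UNIV. M f b p * Gh f e * Bb e n) +
         kk b * - (\<Sum>f\<in>UNIV. \<Sum>e\<in>UNIV. Bb f p * Gh f e * Lh e a n)"
      unfolding Lh_dec by (simp add: algebra_simps)
  qed
  have QM: "Qf M Gh n p a b = Qf L G n p a b - Hx/2 * (dk n p + dk p n) * Bs a b
      - Hx/2 * (dk a b + dk b a) * Bs n p + Hx * Bs n p * Bs a b" for n p a b
  proof -
    have "Qf M Gh n p a b = (\<Sum>f\<in>UNIV. \<Sum>e\<in>UNIV. (L f n p - Hx/2 * (dk n p + dk p n) * kk f)
        * (G f e + Hx * K f * K e) * (L e a b - Hx/2 * (dk a b + dk b a) * kk e))"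
      unfolding Qf_def M_def Dm_def Gh_def ..
    also have "\<dots> = Qf L G n p a b - Hx/2 * (dk n p + dk p n) * Bs a b
      - Hx/2 * (dk a b + dk b a) * Bs n p + Hx * Bs n p * Bs a b"
      unfolding Qf_def Bs_def
      by (rule quad2[OF Gsym _ null]) (simp add: K_def)
    finally show ?thesis .
  qed
  have Z: "Rl Lh dLh Gh p n a b - Rl L dL G p n a b + 2 * Hx * Tt cv p n a b
     = - ((dDd n p a b - dDd b p a n) - (dDm n p a b - dDm b p a n))
       - (Qf Lh Gh n p a b - Qf M Gh n p a b) + (Qf Lh Gh b p a n - Qf M Gh b p a n)" for p n a b
  proof -
    have cv: "cv = (\<lambda>x y. dk x y - Bs x y)" unfolding cv_def Bs_def K_def ..
    have sy: "Bs n a = Bs a n" "Bs p b = Bs b p" "Bs b a = Bs a b" "Bs p n = Bs n p"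
       "Bs b n = Bs n b" "Bs p a = Bs a p" by (simp_all add: Bsym)
    show ?thesis unfolding Rl_eq Rl_eq0 unfolding QM dLh_def dDm_def Fm_def Tt_def cv
      apply (simp add: sy algebra_simps)
      apply (simp add: field_simps)
      done
  qed
  have NN: "negl kk (\<lambda>p n a b. Rl Lh dLh Gh p n a b - Rl L dL G p n a b + 2 * Hx * Tt cv p n a b)"
    unfolding Z by (intro negl_add negl_diff negl_neg N1 N2 N3)
  have "Pj q v u w (\<lambda>p n a b. Rl Lh dLh Gh p n a b - Rl L dL G p n a b + 2 * Hx * Tt cv p n a b) = 0"
    by (rule Pj_zero[OF NN qk vk uk wk])
  then show ?thesis unfolding Pj_lin Gh_def Lh_def dLh_def by simp
qed

lemma sum5:
  fixes \<Phi> :: "'a::finite \<Rightarrow> 'a \<Rightarrow> 'a \<Rightarrow> 'a \<Rightarrow> 'a \<Rightarrow> real"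
  shows "(\<Sum>\<mu>\<in>UNIV. \<Sum>\<alpha>\<in>UNIV. \<Sum>\<nu>\<in>UNIV. \<Sum>\<beta>\<in>UNIV. \<Sum>p\<in>UNIV. \<Phi> \<mu> \<alpha> \<nu> \<beta> p)
       = (\<Sum>p\<in>UNIV. \<Sum>\<nu>\<in>UNIV. \<Sum>\<alpha>\<in>UNIV. \<Sum>\<beta>\<in>UNIV. \<Sum>\<mu>\<in>UNIV. \<Phi> \<mu> \<alpha> \<nu> \<beta> p)"
proof -
  have "(\<Sum>\<mu>\<in>UNIV. \<Sum>\<alpha>\<in>UNIV. \<Sum>\<nu>\<in>UNIV. \<Sum>\<beta>\<in>UNIV. \<Sum>p\<in>UNIV. \<Phi> \<mu> \<alpha> \<nu> \<beta> p)
      = (\<Sum>\<mu>\<in>UNIV. \<Sum>\<alpha>\<in>UNIV. \<Sum>\<nu>\<in>UNIV. \<Sum>p\<in>UNIV. \<Sum>\<beta>\<in>UNIV. \<Phi> \<mu> \<alpha> \<nu> \<beta> p)"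
    by (rule sum.cong[OF refl], rule sum.cong[OF refl], rule sum.cong[OF refl], rule sum.swap)
  also have "\<dots> = (\<Sum>\<mu>\<in>UNIV. \<Sum>\<alpha>\<in>UNIV. \<Sum>p\<in>UNIV. \<Sum>\<nu>\<in>UNIV. \<Sum>\<beta>\<in>UNIV. \<Phi> \<mu> \<alpha> \<nu> \<beta> p)"
    by (rule sum.cong[OF refl], rule sum.cong[OF refl], rule sum.swap)
  also have "\<dots> = (\<Sum>\<mu>\<in>UNIV. \<Sum>p\<in>UNIV. \<Sum>\<alpha>\<in>UNIV. \<Sum>\<nu>\<in>UNIV. \<Sum>\<beta>\<in>UNIV. \<Phi> \<mu> \<alpha> \<nu> \<beta> p)"
    by (rule sum.cong[OF refl], rule sum.swap)
  also have "\<dots> = (\<Sum>p\<in>UNIV. \<Sum>\<mu>\<in>UNIV. \<Sum>\<alpha>\<in>UNIV. \<Sum>\<nu>\<in>UNIV. \<Sum>\<beta>\<in>UNIV. \<Phi> \<mu> \<alpha> \<nu> \<beta> p)"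
    by (rule sum.swap)
  also have "\<dots> = (\<Sum>p\<in>UNIV. \<Sum>\<alpha>\<in>UNIV. \<Sum>\<mu>\<in>UNIV. \<Sum>\<nu>\<in>UNIV. \<Sum>\<beta>\<in>UNIV. \<Phi> \<mu> \<alpha> \<nu> \<beta> p)"
    by (rule sum.cong[OF refl], rule sum.swap)
  also have "\<dots> = (\<Sum>p\<in>UNIV. \<Sum>\<alpha>\<in>UNIV. \<Sum>\<nu>\<in>UNIV. \<Sum>\<mu>\<in>UNIV. \<Sum>\<beta>\<in>UNIV. \<Phi> \<mu> \<alpha> \<nu> \<beta> p)"
    by (rule sum.cong[OF refl], rule sum.cong[OF refl], rule sum.swap)
  also have "\<dots> = (\<Sum>p\<in>UNIV. \<Sum>\<alpha>\<in>UNIV. \<Sum>\<nu>\<in>UNIV. \<Sum>\<beta>\<in>UNIV. \<Sum>\<mu>\<in>UNIV. \<Phi> \<mu> \<alpha> \<nu> \<beta> p)"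
    by (rule sum.cong[OF refl], rule sum.cong[OF refl], rule sum.cong[OF refl], rule sum.swap)
  also have "\<dots> = (\<Sum>p\<in>UNIV. \<Sum>\<nu>\<in>UNIV. \<Sum>\<alpha>\<in>UNIV. \<Sum>\<beta>\<in>UNIV. \<Sum>\<mu>\<in>UNIV. \<Phi> \<mu> \<alpha> \<nu> \<beta> p)"
    by (rule sum.cong[OF refl], rule sum.swap)
  finally show ?thesis .
qed

lemma rearr:
  fixes X :: "'a::finite \<Rightarrow> 'a \<Rightarrow> real" and F :: "'a \<Rightarrow> 'a \<Rightarrow> 'a \<Rightarrow> 'a \<Rightarrow> real"
  shows "(\<Sum>\<mu>\<in>UNIV. \<Sum>\<alpha>\<in>UNIV. \<Sum>\<nu>\<in>UNIV. \<Sum>\<beta>\<in>UNIV.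
            (\<Sum>p\<in>UNIV. X \<mu> p * F p \<nu> \<alpha> \<beta>) * c \<mu> * v \<nu> * u \<alpha> * w \<beta>)
       = (\<Sum>p\<in>UNIV. \<Sum>n\<in>UNIV. \<Sum>a\<in>UNIV. \<Sum>b\<in>UNIV. (\<Sum>\<mu>\<in>UNIV. c \<mu> * X \<mu> p) * v n * u a * w b * F p n a b)"
proof -
  have "(\<Sum>\<mu>\<in>UNIV. \<Sum>\<alpha>\<in>UNIV. \<Sum>\<nu>\<in>UNIV. \<Sum>\<beta>\<in>UNIV.
            (\<Sum>p\<in>UNIV. X \<mu> p * F p \<nu> \<alpha> \<beta>) * c \<mu> * v \<nu> * u \<alpha> * w \<beta>)
     = (\<Sum>\<mu>\<in>UNIV. \<Sum>\<alpha>\<in>UNIV. \<Sum>\<nu>\<in>UNIV. \<Sum>\<beta>\<in>UNIV. \<Sum>p\<in>UNIV.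
            c \<mu> * X \<mu> p * v \<nu> * u \<alpha> * w \<beta> * F p \<nu> \<alpha> \<beta>)"
    by (intro sum.cong refl) (simp add: sum_distrib_left sum_distrib_right mult_ac)
  also have "\<dots> = (\<Sum>p\<in>UNIV. \<Sum>\<nu>\<in>UNIV. \<Sum>\<alpha>\<in>UNIV. \<Sum>\<beta>\<in>UNIV. \<Sum>\<mu>\<in>UNIV.
            c \<mu> * X \<mu> p * v \<nu> * u \<alpha> * w \<beta> * F p \<nu> \<alpha> \<beta>)"
    by (rule sum5)
  also have "\<dots> = (\<Sum>p\<in>UNIV. \<Sum>n\<in>UNIV. \<Sum>a\<in>UNIV. \<Sum>b\<in>UNIV. (\<Sum>\<mu>\<in>UNIV. c \<mu> * X \<mu> p) * v n * u a * w b * F p n a b)"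
    by (simp add: sum_distrib_right)
  finally show ?thesis .
qed


theorem lemma4p9:
  fixes U :: "(real^'n) set"
    and g gh :: "real^'n \<Rightarrow> real^'n^'n"
    and k :: "real^'n \<Rightarrow> real^'n"
    and H :: "real^'n \<Rightarrow> real"
    and h :: "real^'n \<Rightarrow> real^'n^'n"
  assumes "open U"
    and "metric_on U g" and "metric_on U gh"
    and "\<forall>a. smooth_on U (\<lambda>y. k y $ a)" and "smooth_on U H"
    and KS: "\<forall>x\<in>U. \<forall>a b. g x $ a $ b = gh x $ a $ b + H x * (k x $ a) * (k x $ b)"
    and null: "\<forall>x\<in>U. (\<Sum>a\<in>UNIV. \<Sum>b\<in>UNIV. ginv g x a b * k x $ a * k x $ b) = 0"
    and geod: "\<forall>x\<in>U. \<forall>b. (\<Sum>a\<in>UNIV. raise1 g k x a * covd1 g k x a b) = 0"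
    and proj: "\<forall>x\<in>U. \<forall>a b. (\<Sum>c\<in>UNIV. h x $ a $ c * h x $ c $ b) = h x $ a $ b"
    and hsym: "\<forall>x\<in>U. \<forall>a b. (\<Sum>c\<in>UNIV. g x $ a $ c * h x $ c $ b)
                            = (\<Sum>c\<in>UNIV. g x $ b $ c * h x $ c $ a)"
    and hk: "\<forall>x\<in>U. \<forall>b. (\<Sum>a\<in>UNIV. h x $ a $ b * k x $ a) = 0"
    and "x \<in> U"
  shows "(\<Sum>\<mu>\<in>UNIV. \<Sum>\<alpha>\<in>UNIV. \<Sum>\<nu>\<in>UNIV. \<Sum>\<beta>\<in>UNIV.
            riem gh x \<mu> \<alpha> \<nu> \<beta> * h x $ \<delta> $ \<mu> * h x $ \<nu> $ \<gamma> * h x $ \<alpha> $ \<epsilon> * h x $ \<beta> $ \<sigma>)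
       = (\<Sum>\<mu>\<in>UNIV. \<Sum>\<alpha>\<in>UNIV. \<Sum>\<nu>\<in>UNIV. \<Sum>\<beta>\<in>UNIV.
            riem g x \<mu> \<alpha> \<nu> \<beta> * h x $ \<delta> $ \<mu> * h x $ \<nu> $ \<gamma> * h x $ \<alpha> $ \<epsilon> * h x $ \<beta> $ \<sigma>)
         - 2 * H x * (\<Sum>\<tau>\<in>UNIV. \<Sum>\<nu>\<in>UNIV. \<Sum>\<alpha>\<in>UNIV. \<Sum>\<beta>\<in>UNIV.
            (\<Sum>\<rho>\<in>UNIV. h x $ \<delta> $ \<rho> * ginv g x \<rho> \<tau>)
            * h x $ \<nu> $ \<gamma> * h x $ \<alpha> $ \<epsilon> * h x $ \<beta> $ \<sigma>
            * ((1/4) * (covd1 g k x \<nu> \<tau> * covd1 g k x \<alpha> \<beta> - covd1 g k x \<beta> \<tau> * covd1 g k x \<alpha> \<nu>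
                        - covd1 g k x \<nu> \<alpha> * covd1 g k x \<tau> \<beta> + covd1 g k x \<beta> \<alpha> * covd1 g k x \<tau> \<nu>)
             + (1/4) * (covd1 g k x \<nu> \<beta> - covd1 g k x \<beta> \<nu>) * (covd1 g k x \<alpha> \<tau> - covd1 g k x \<tau> \<alpha>)))"
proof -
  note Uo = assms(1) and gm = assms(2) and ghm = assms(3) and ks = assms(4) and Hs = assms(5)
    and xU = assms(12)
  define kk where "kk = (\<lambda>a. k x $ a)"
  define Hx where "Hx = H x"
  define dH where "dH = (\<lambda>c. pd H c x)"
  define ddH where "ddH = (\<lambda>n c. pd (pd H c) n x)"
  define dk where "dk = (\<lambda>c a. pd (\<lambda>y. k y $ a) c x)"
  define ddk where "ddk = (\<lambda>n c a. pd (pd (\<lambda>y. k y $ a) c) n x)"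
  define G where "G = ginv g x"
  define L where "L = Lc g x"
  define dL where "dL = (\<lambda>n p a b. pd (\<lambda>y. Lc g y p a b) n x)"
  define q where "q = (\<lambda>p. \<Sum>\<rho>\<in>UNIV. h x $ \<delta> $ \<rho> * ginv g x \<rho> p)"
  define v where "v = (\<lambda>n. h x $ n $ \<gamma>)"
  define u where "u = (\<lambda>n. h x $ n $ \<epsilon>)"
  define w where "w = (\<lambda>n. h x $ n $ \<sigma>)"
  define K where "K = (\<lambda>a. \<Sum>b\<in>UNIV. G a b * kk b)"
  have dk_y: "y \<in> U \<Longrightarrow> (\<lambda>z. k z $ a) differentiable (at y)" for y a
    using ks smooth_diff by blast
  have dH_y: "y \<in> U \<Longrightarrow> H differentiable (at y)" for y
    using Hs smooth_diff by blast
  have dpk_y: "y \<in> U \<Longrightarrow> pd (\<lambda>z. k z $ a) c differentiable (at y)" for y a c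
    using ks smooth_diff smooth_pd by blast
  have dpH_y: "y \<in> U \<Longrightarrow> pd H c differentiable (at y)" for y c
    using Hs smooth_diff smooth_pd by blast
  have dg_y: "y \<in> U \<Longrightarrow> (\<lambda>z. g z $ a $ b) differentiable (at y)" for y a b
    using smooth_diff metric_smooth[OF gm] by blast
  define Ey where "Ey = (\<lambda>y c a b. pd H c y * k y $ a * k y $ b + H y * pd (\<lambda>z. k z $ a) c y * k y $ b
      + H y * k y $ a * pd (\<lambda>z. k z $ b) c y)"
  have gh_eq: "y \<in> U \<Longrightarrow> gh y $ a $ b = g y $ a $ b - H y * k y $ a * k y $ b" for y a b
    using KS by simp
  have pd_gh: "pd (\<lambda>z. gh z $ a $ b) c y = pd (\<lambda>z. g z $ a $ b) c y - Ey y c a b" if y: "y \<in> U" for y a b c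
  proof -
    have "pd (\<lambda>z. gh z $ a $ b) c y = pd (\<lambda>z. g z $ a $ b - H z * k z $ a * k z $ b) c y"
      by (rule pd_cong[OF Uo y]) (simp add: gh_eq)
    also have "\<dots> = pd (\<lambda>z. g z $ a $ b) c y - Ey y c a b"
      by (simp add: pd_diff pd_mult3 differentiable_mult dg_y dH_y dk_y y Ey_def)
    finally show ?thesis .
  qed
  have Lc_gh: "Lc gh y p a b = Lc g y p a b - 1/2 * (Ey y a p b + Ey y b p a - Ey y p a b)" if y: "y \<in> U" for y p a b
    unfolding Lc_def pd_gh[OF y] by (simp add: algebra_simps)
  have Ey_x: "Ey x c a b = Ef kk Hx dH dk c a b" for c a b
    unfolding Ey_def Ef_def kk_def Hx_def dH_def dk_def ..
  have Ey_diff: "(\<lambda>y. Ey y c a b) differentiable (at x)" for c a b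
    unfolding Ey_def by (intro differentiable_add differentiable_mult dk_y dH_y dpk_y dpH_y xU)
  have pd_Ey: "pd (\<lambda>y. Ey y c a b) n x = Ff kk Hx dH ddH dk ddk n c a b" for c a b n
  proof -
    have d1: "(\<lambda>y. pd H c y * k y $ a * k y $ b) differentiable (at x)"
      by (intro differentiable_mult dk_y dpH_y xU)
    have d2: "(\<lambda>y. H y * pd (\<lambda>z. k z $ a) c y * k y $ b) differentiable (at x)"
      by (intro differentiable_mult dk_y dH_y dpk_y xU)
    have d3: "(\<lambda>y. H y * k y $ a * pd (\<lambda>z. k z $ b) c y) differentiable (at x)"
      by (intro differentiable_mult dk_y dH_y dpk_y xU)
    have "pd (\<lambda>y. Ey y c a b) n x = pd (\<lambda>y. pd H c y * k y $ a * k y $ b) n x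
       + pd (\<lambda>y. H y * pd (\<lambda>z. k z $ a) c y * k y $ b) n x + pd (\<lambda>y. H y * k y $ a * pd (\<lambda>z. k z $ b) c y) n x"
      unfolding Ey_def by (simp only: pd_add d1 d2 d3 differentiable_add)
    also have "\<dots> = Ff kk Hx dH ddH dk ddk n c a b"
      unfolding pd_mult3[OF dpH_y[OF xU] dk_y[OF xU] dk_y[OF xU]]
        pd_mult3[OF dH_y[OF xU] dpk_y[OF xU] dk_y[OF xU]] pd_mult3[OF dH_y[OF xU] dk_y[OF xU] dpk_y[OF xU]]
      unfolding Ff_def kk_def Hx_def dH_def dk_def ddH_def ddk_def by (simp add: algebra_simps)
    finally show ?thesis .
  qed
  have dLc_gh: "pd (\<lambda>y. Lc gh y p a b) n x = dL n p a b
      - 1/2 * (Ff kk Hx dH ddH dk ddk n a p b + Ff kk Hx dH ddH dk ddk n b p a - Ff kk Hx dH ddH dk ddk n p a b)" for n p a b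
  proof -
    have "pd (\<lambda>y. Lc gh y p a b) n x = pd (\<lambda>y. Lc g y p a b - 1/2 * (Ey y a p b + Ey y b p a - Ey y p a b)) n x"
      by (rule pd_cong[OF Uo xU]) (simp add: Lc_gh)
    also have "\<dots> = dL n p a b - 1/2 * (pd (\<lambda>y. Ey y a p b) n x + pd (\<lambda>y. Ey y b p a) n x - pd (\<lambda>y. Ey y p a b) n x)"
    proof -
      have dX: "(\<lambda>y. Ey y a p b + Ey y b p a - Ey y p a b) differentiable (at x)"
        by (intro differentiable_add differentiable_diff Ey_diff)
      have dX2: "(\<lambda>y. 1/2 * (Ey y a p b + Ey y b p a - Ey y p a b)) differentiable (at x)"
        by (intro differentiable_mult differentiable_const dX)
      show ?thesis
        unfolding pd_diff[OF Lc_diff[OF gm xU] dX2] pd_cmult[OF dX]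
          pd_diff[OF differentiable_add[OF Ey_diff Ey_diff] Ey_diff] pd_add[OF Ey_diff Ey_diff] dL_def ..
    qed
    finally show ?thesis unfolding pd_Ey .
  qed
  have Gsym: "G a b = G b a" for a b unfolding G_def by (rule ginv_sym[OF gm xU])
  have gG: "(\<Sum>c\<in>UNIV. g x $ i $ c * G c j) = (if i = j then 1 else 0)" for i j
    unfolding G_def by (rule ginv_right[OF gm xU])
  have gK: "(\<Sum>c\<in>UNIV. g x $ i $ c * K c) = kk i" for i
  proof -
    have "(\<Sum>c\<in>UNIV. g x $ i $ c * K c) = (\<Sum>c\<in>UNIV. \<Sum>b\<in>UNIV. g x $ i $ c * G c b * kk b)"
      unfolding K_def by (simp add: sum_distrib_left mult.assoc)
    also have "\<dots> = (\<Sum>b\<in>UNIV. \<Sum>c\<in>UNIV. g x $ i $ c * G c b * kk b)" by (rule sum.swap)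
    also have "\<dots> = (\<Sum>b\<in>UNIV. (\<Sum>c\<in>UNIV. g x $ i $ c * G c b) * kk b)" by (simp add: sum_distrib_right)
    also have "\<dots> = (\<Sum>b\<in>UNIV. (if i = b then kk b else 0))" by (rule sum.cong[OF refl]) (simp add: gG)
    also have "\<dots> = kk i" by simp
    finally show ?thesis .
  qed
  have kG: "(\<Sum>c\<in>UNIV. kk c * G c j) = K j" for j
    unfolding K_def by (simp add: Gsym mult.commute)
  have kK: "(\<Sum>c\<in>UNIV. kk c * K c) = 0"
    using null xU unfolding K_def kk_def G_def by (simp add: sum_distrib_left algebra_simps)
  have ginv_gh: "ginv gh x f e = G f e + Hx * K f * K e" for f e
  proof -
    define B :: "real^'n^'n" where "B = (\<chi> i j. G i j + Hx * K i * K j)"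
    have "gh x ** B = mat 1"
    proof -
      have "(gh x ** B) $ i $ j = (if i = j then 1 else 0)" for i j
      proof -
        have "(gh x ** B) $ i $ j = (\<Sum>c\<in>UNIV. (g x $ i $ c - Hx * kk i * kk c) * (G c j + Hx * K c * K j))"
          by (simp add: mmul_nth B_def gh_eq[OF xU] Hx_def kk_def)
        also have "\<dots> = (\<Sum>c\<in>UNIV. g x $ i $ c * G c j) + Hx * K j * (\<Sum>c\<in>UNIV. g x $ i $ c * K c)
           - Hx * kk i * (\<Sum>c\<in>UNIV. kk c * G c j) - Hx * Hx * kk i * K j * (\<Sum>c\<in>UNIV. kk c * K c)"
        proof -
          have "(\<Sum>c\<in>UNIV. (g x $ i $ c - Hx * kk i * kk c) * (G c j + Hx * K c * K j))
            = (\<Sum>c\<in>UNIV. g x $ i $ c * G c j + (Hx * K j) * (g x $ i $ c * K c)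
                - (Hx * kk i) * (kk c * G c j) - (Hx * Hx * kk i * K j) * (kk c * K c))"
            by (rule sum.cong[OF refl]) (simp only: ring_distribs mult_ac diff_diff_eq add_ac)
          also have "\<dots> = (\<Sum>c\<in>UNIV. g x $ i $ c * G c j) + (Hx * K j) * (\<Sum>c\<in>UNIV. g x $ i $ c * K c)
           - (Hx * kk i) * (\<Sum>c\<in>UNIV. kk c * G c j) - (Hx * Hx * kk i * K j) * (\<Sum>c\<in>UNIV. kk c * K c)"
            by (simp only: sum.distrib sum_subtractf sum_distrib_left)
          finally show ?thesis by simp
        qed
        also have "\<dots> = (if i = j then 1 else 0)" by (simp add: gG gK kG kK)
        finally show ?thesis .
      qed
      then show ?thesis by (simp add: vec_eq_iff mat1_nth)
    qed
    then have "matrix_inv (gh x) = B" by (rule inv_unique[OF metric_det[OF ghm xU]])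
    then show ?thesis by (simp add: ginv_def B_def)
  qed
  have covd: "covd1 g k x a b = dk a b - (\<Sum>e\<in>UNIV. (\<Sum>b'\<in>UNIV. G e b' * kk b') * L e a b)" for a b
  proof -
    have "(\<Sum>l\<in>UNIV. chr g x l a b * k x $ l) = (\<Sum>l\<in>UNIV. \<Sum>d\<in>UNIV. G l d * L d a b * kk l)"
      unfolding chr_Lc G_def L_def kk_def by (simp add: sum_distrib_right)
    also have "\<dots> = (\<Sum>d\<in>UNIV. \<Sum>l\<in>UNIV. G l d * L d a b * kk l)" by (rule sum.swap)
    also have "\<dots> = (\<Sum>e\<in>UNIV. (\<Sum>b'\<in>UNIV. G e b' * kk b') * L e a b)"
      by (rule sum.cong[OF refl]) (simp add: sum_distrib_right sum_distrib_left Gsym mult_ac)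
    finally show ?thesis unfolding covd1_def dk_def by simp
  qed
  have qk: "(\<Sum>p\<in>UNIV. q p * kk p) = 0"
  proof -
    define Hm where "Hm = h x"
    define Gm where "Gm = matrix_inv (g x)"
    define M where "M = g x ** Hm"
    have Msym: "transpose M = M"
      using hsym xU by (simp add: vec_eq_iff transpose_def M_def Hm_def mmul_nth)
    have HGM: "Hm = Gm ** M"
      unfolding M_def Gm_def
      by (simp add: matrix_mul_assoc inv_mat(2)[OF metric_det[OF gm xU]] matrix_mul_lid)
    have Gt: "transpose Gm = Gm"
      using ginv_sym[OF gm xU] by (simp add: vec_eq_iff transpose_def Gm_def ginv_def)
    have HGs: "transpose (Hm ** Gm) = Hm ** Gm"
      unfolding HGM by (simp add: matrix_transpose_mul Msym Gt matrix_mul_assoc)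
    have qe: "q p = (\<Sum>\<rho>\<in>UNIV. h x $ p $ \<rho> * G \<rho> \<delta>)" for p
    proof -
      have "q p = (Hm ** Gm) $ \<delta> $ p" unfolding q_def mmul_nth Hm_def Gm_def ginv_def ..
      also have "\<dots> = transpose (Hm ** Gm) $ \<delta> $ p" by (simp add: HGs)
      also have "\<dots> = (\<Sum>\<rho>\<in>UNIV. h x $ p $ \<rho> * G \<rho> \<delta>)"
        by (simp add: transpose_def mmul_nth Hm_def Gm_def G_def ginv_def)
      finally show ?thesis .
    qed
    have "(\<Sum>p\<in>UNIV. q p * kk p) = (\<Sum>p\<in>UNIV. \<Sum>\<rho>\<in>UNIV. h x $ p $ \<rho> * kk p * G \<rho> \<delta>)"
      by (rule sum.cong[OF refl]) (simp add: qe sum_distrib_right sum_distrib_left mult_ac)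
    also have "\<dots> = (\<Sum>\<rho>\<in>UNIV. (\<Sum>p\<in>UNIV. h x $ p $ \<rho> * kk p) * G \<rho> \<delta>)"
      by (subst sum.swap) (simp add: sum_distrib_right)
    also have "\<dots> = 0" using hk xU by (simp add: kk_def)
    finally show ?thesis .
  qed
  have hK: "(\<Sum>\<mu>\<in>UNIV. h x $ \<delta> $ \<mu> * K \<mu>) = 0"
  proof -
    have "(\<Sum>\<mu>\<in>UNIV. h x $ \<delta> $ \<mu> * K \<mu>) = (\<Sum>\<mu>\<in>UNIV. \<Sum>b\<in>UNIV. h x $ \<delta> $ \<mu> * G \<mu> b * kk b)"
      unfolding K_def by (simp add: sum_distrib_left mult.assoc)
    also have "\<dots> = (\<Sum>b\<in>UNIV. \<Sum>\<mu>\<in>UNIV. h x $ \<delta> $ \<mu> * G \<mu> b * kk b)" by (rule sum.swap)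
    also have "\<dots> = (\<Sum>b\<in>UNIV. q b * kk b)" unfolding q_def G_def by (simp add: sum_distrib_right)
    finally show ?thesis using qk by simp
  qed
  have qh: "(\<lambda>p. \<Sum>\<mu>\<in>UNIV. h x $ \<delta> $ \<mu> * ginv gh x \<mu> p) = q"
  proof
    fix p
    have "(\<Sum>\<mu>\<in>UNIV. h x $ \<delta> $ \<mu> * ginv gh x \<mu> p)
        = (\<Sum>\<mu>\<in>UNIV. h x $ \<delta> $ \<mu> * G \<mu> p) + Hx * K p * (\<Sum>\<mu>\<in>UNIV. h x $ \<delta> $ \<mu> * K \<mu>)"
      by (simp add: ginv_gh sum_distrib_left sum.distrib ring_distribs mult_ac)
    then show "(\<Sum>\<mu>\<in>UNIV. h x $ \<delta> $ \<mu> * ginv gh x \<mu> p) = q p"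
      by (simp add: hK q_def G_def)
  qed
  have qhp: "(\<Sum>\<mu>\<in>UNIV. h x $ \<delta> $ \<mu> * ginv gh x \<mu> p) = q p" for p
    using qh by (rule fun_cong)
  have R_gh: "riem gh x \<mu> \<alpha> \<nu> \<beta> = (\<Sum>p\<in>UNIV. ginv gh x \<mu> p *
      Rl (Lc gh x) (\<lambda>n p a b. pd (\<lambda>y. Lc gh y p a b) n x) (ginv gh x) p \<nu> \<alpha> \<beta>)" for \<mu> \<alpha> \<nu> \<beta>
    unfolding riem_formula[OF ghm Uo xU] Rl_def ..
  have R_g: "riem g x \<mu> \<alpha> \<nu> \<beta> = (\<Sum>p\<in>UNIV. ginv g x \<mu> p * Rl L dL G p \<nu> \<alpha> \<beta>)" for \<mu> \<alpha> \<nu> \<beta>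
    unfolding riem_formula[OF gm Uo xU] Rl_def L_def dL_def G_def ..
  have Lh: "Lc gh x = (\<lambda>p a b. L p a b - 1/2 * (Ef kk Hx dH dk a p b + Ef kk Hx dH dk b p a - Ef kk Hx dH dk p a b))"
    by (intro ext) (simp add: Lc_gh[OF xU] Ey_x L_def)
  have dLh: "(\<lambda>n p a b. pd (\<lambda>y. Lc gh y p a b) n x) = (\<lambda>n p a b. dL n p a b
      - 1/2 * (Ff kk Hx dH ddH dk ddk n a p b + Ff kk Hx dH ddH dk ddk n b p a - Ff kk Hx dH ddH dk ddk n p a b))"
    by (intro ext) (rule dLc_gh)
  have Ghf: "ginv gh x = (\<lambda>f e. G f e + Hx * (\<Sum>b\<in>UNIV. G f b * kk b) * (\<Sum>b\<in>UNIV. G e b * kk b))"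
    by (intro ext) (simp add: ginv_gh K_def)
  have covf: "covd1 g k x = (\<lambda>a b. dk a b - (\<Sum>e\<in>UNIV. (\<Sum>b'\<in>UNIV. G e b' * kk b') * L e a b))"
    by (intro ext) (rule covd)
  have Lsym: "L e a b = L e b a" for e a b unfolding L_def by (rule Lc_sym[OF gm Uo xU])
  have null0: "(\<Sum>a\<in>UNIV. \<Sum>b\<in>UNIV. G a b * kk a * kk b) = 0"
    using null xU unfolding G_def kk_def by simp
  have vk: "(\<Sum>p\<in>UNIV. v p * kk p) = 0" using hk xU unfolding v_def kk_def by simp
  have uk: "(\<Sum>p\<in>UNIV. u p * kk p) = 0" using hk xU unfolding u_def kk_def by simp
  have wk: "(\<Sum>p\<in>UNIV. w p * kk p) = 0" using hk xU unfolding w_def kk_def by simp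
  have C: "Pj q v u w (Rl (Lc gh x) (\<lambda>n p a b. pd (\<lambda>y. Lc gh y p a b) n x) (ginv gh x))
       = Pj q v u w (Rl L dL G) - 2 * Hx * Pj q v u w (Tt (covd1 g k x))"
    unfolding Lh dLh Ghf covf by (rule core[OF Gsym Lsym null0 qk vk uk wk])
  have LHS: "(\<Sum>\<mu>\<in>UNIV. \<Sum>\<alpha>\<in>UNIV. \<Sum>\<nu>\<in>UNIV. \<Sum>\<beta>\<in>UNIV.
            riem gh x \<mu> \<alpha> \<nu> \<beta> * h x $ \<delta> $ \<mu> * h x $ \<nu> $ \<gamma> * h x $ \<alpha> $ \<epsilon> * h x $ \<beta> $ \<sigma>)
      = Pj q v u w (Rl (Lc gh x) (\<lambda>n p a b. pd (\<lambda>y. Lc gh y p a b) n x) (ginv gh x))"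
    unfolding R_gh rearr Pj_def qhp v_def u_def w_def ..
  have RHS1: "(\<Sum>\<mu>\<in>UNIV. \<Sum>\<alpha>\<in>UNIV. \<Sum>\<nu>\<in>UNIV. \<Sum>\<beta>\<in>UNIV.
            riem g x \<mu> \<alpha> \<nu> \<beta> * h x $ \<delta> $ \<mu> * h x $ \<nu> $ \<gamma> * h x $ \<alpha> $ \<epsilon> * h x $ \<beta> $ \<sigma>)
      = Pj q v u w (Rl L dL G)"
    unfolding R_g rearr Pj_def q_def v_def u_def w_def ..
  have RHS2: "(\<Sum>\<tau>\<in>UNIV. \<Sum>\<nu>\<in>UNIV. \<Sum>\<alpha>\<in>UNIV. \<Sum>\<beta>\<in>UNIV.
            (\<Sum>\<rho>\<in>UNIV. h x $ \<delta> $ \<rho> * ginv g x \<rho> \<tau>)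
            * h x $ \<nu> $ \<gamma> * h x $ \<alpha> $ \<epsilon> * h x $ \<beta> $ \<sigma>
            * ((1/4) * (covd1 g k x \<nu> \<tau> * covd1 g k x \<alpha> \<beta> - covd1 g k x \<beta> \<tau> * covd1 g k x \<alpha> \<nu>
                        - covd1 g k x \<nu> \<alpha> * covd1 g k x \<tau> \<beta> + covd1 g k x \<beta> \<alpha> * covd1 g k x \<tau> \<nu>)
             + (1/4) * (covd1 g k x \<nu> \<beta> - covd1 g k x \<beta> \<nu>) * (covd1 g k x \<alpha> \<tau> - covd1 g k x \<tau> \<alpha>)))
      = Pj q v u w (Tt (covd1 g k x))"
    unfolding Pj_def Tt_def q_def v_def u_def w_def ..
  show ?thesis unfolding LHS RHS1 RHS2 C Hx_def ..
qed

end
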